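(* Let $\Gamma$ be a connected highly-regular graph. Then $\mathrm{I}(\Gamma)=\operatorname{diam}(\Gamma)+1$ if and only if $\Gamma$ is distance-regular.
   Context: All graphs are finite, undirected, without loops or multiple edges; $d(u,v)$, $\operatorname{diam}(\Gamma)$ and $D_i(u)=\{v:d(u,v)=i\}$ denote graph distance, diameter and distance spheres. A graph $\Gamma$ of order $n$ is highly-regular with collapsed adjacency matrix (CAM) $C=[c_{i,j}]_{1\le i,j\le m}$, where $2\le m<n$ (the value $m=n$ is allowed only when $n=2$), if for every vertex $u$ there is a partition of $V(\Gamma)$ into nonempty sets $V_1(u)=\{u\},V_2(u),\dots,V_m(u)$ such that for all $i,j$, every vertex $y\in V_j(u)$ is adjacent to exactly $c_{i,j}$ vertices of $V_i(u)$. The index $\mathrm{I}(\Gamma)$ of a highly-regular graph $\Gamma$ is the least $m$ such that $\Gamma$ is highly-regular with some CAM of size $m\times m$. A connected graph $\Gamma$ is distance-regular if for all $u,v$ the numbers $|D_1(v)\cap D_{i-1}(u)|$, $|D_1(v)\cap D_i(u)|$, $|D_1(v)\cap D_{i+1}(u)|$ depend only on $i=d(u,v)$. *)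

theory Defs
  imports Main
begin

definition simple_graph :: "'a set \<Rightarrow> ('a \<Rightarrow> 'a \<Rightarrow> bool) \<Rightarrow> bool" where
  "simple_graph V E \<longleftrightarrow> finite V \<and> (\<forall>x y. E x y \<longrightarrow> x \<in> V \<and> y \<in> V)
     \<and> (\<forall>x y. E x y \<longrightarrow> E y x) \<and> (\<forall>x. \<not> E x x)"

definition adj_rel :: "('a \<Rightarrow> 'a \<Rightarrow> bool) \<Rightarrow> ('a \<times> 'a) set" where
  "adj_rel E = {(x, y). E x y}"

definition gdist :: "('a \<Rightarrow> 'a \<Rightarrow> bool) \<Rightarrow> 'a \<Rightarrow> 'a \<Rightarrow> nat" where
  "gdist E u v = (LEAST k. (u, v) \<in> adj_rel E ^^ k)"

definition gconnected :: "'a set \<Rightarrow> ('a \<Rightarrow> 'a \<Rightarrow> bool) \<Rightarrow> bool" where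
  "gconnected V E \<longleftrightarrow> V \<noteq> {} \<and> (\<forall>u\<in>V. \<forall>v\<in>V. \<exists>k. (u, v) \<in> adj_rel E ^^ k)"

definition diam :: "'a set \<Rightarrow> ('a \<Rightarrow> 'a \<Rightarrow> bool) \<Rightarrow> nat" where
  "diam V E = Max {gdist E u v | u v. u \<in> V \<and> v \<in> V}"

definition sphere :: "'a set \<Rightarrow> ('a \<Rightarrow> 'a \<Rightarrow> bool) \<Rightarrow> nat \<Rightarrow> 'a \<Rightarrow> 'a set" where
  "sphere V E i u = {v \<in> V. gdist E u v = i}"

definition distance_regular :: "'a set \<Rightarrow> ('a \<Rightarrow> 'a \<Rightarrow> bool) \<Rightarrow> bool" where
  "distance_regular V E \<longleftrightarrow> gconnected V E \<and>
     (\<forall>u\<in>V. \<forall>v\<in>V. \<forall>u'\<in>V. \<forall>v'\<in>V. gdist E u v = gdist E u' v' \<longrightarrow>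
        (let i = gdist E u v in
          card (sphere V E 1 v \<inter> sphere V E (i - 1) u) = card (sphere V E 1 v' \<inter> sphere V E (i - 1) u')
        \<and> card (sphere V E 1 v \<inter> sphere V E i u) = card (sphere V E 1 v' \<inter> sphere V E i u')
        \<and> card (sphere V E 1 v \<inter> sphere V E (i + 1) u) = card (sphere V E 1 v' \<inter> sphere V E (i + 1) u')))"

definition hr_cam :: "'a set \<Rightarrow> ('a \<Rightarrow> 'a \<Rightarrow> bool) \<Rightarrow> nat \<Rightarrow> (nat \<Rightarrow> nat \<Rightarrow> nat) \<Rightarrow> bool" where
  "hr_cam V E m C \<longleftrightarrow>
     2 \<le> m \<and> (m < card V \<or> (m = card V \<and> card V = 2)) \<and>
     (\<forall>u\<in>V. \<exists>P :: nat \<Rightarrow> 'a set.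
        P 1 = {u} \<and> (\<forall>i\<in>{1..m}. P i \<noteq> {}) \<and> (\<Union>i\<in>{1..m}. P i) = V \<and>
        (\<forall>i\<in>{1..m}. \<forall>j\<in>{1..m}. i \<noteq> j \<longrightarrow> P i \<inter> P j = {}) \<and>
        (\<forall>i\<in>{1..m}. \<forall>j\<in>{1..m}. \<forall>y\<in>P j. card {x \<in> P i. E x y} = C i j))"

definition highly_regular :: "'a set \<Rightarrow> ('a \<Rightarrow> 'a \<Rightarrow> bool) \<Rightarrow> bool" where
  "highly_regular V E \<longleftrightarrow> (\<exists>m C. hr_cam V E m C)"

definition hr_index :: "'a set \<Rightarrow> ('a \<Rightarrow> 'a \<Rightarrow> bool) \<Rightarrow> nat" where
  "hr_index V E = (LEAST m. \<exists>C. hr_cam V E m C)"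

end

theory Submission
  imports Defs
begin

lemma sgE: assumes "simple_graph V E"
  shows "finite V" "E x y \<Longrightarrow> x \<in> V" "E x y \<Longrightarrow> y \<in> V" "E x y \<Longrightarrow> E y x" "\<not> E x x"
  using assms unfolding simple_graph_def by blast+

fun Q :: "(nat \<Rightarrow> nat \<Rightarrow> nat) \<Rightarrow> nat \<Rightarrow> nat \<Rightarrow> nat \<Rightarrow> bool" where
  "Q C m 0 j = (j = 1)"
| "Q C m (Suc k) j = (Q C m k j \<or> (\<exists>i\<in>{1..m}. Q C m k i \<and> 0 < C i j))"

definition dl :: "(nat \<Rightarrow> nat \<Rightarrow> nat) \<Rightarrow> nat \<Rightarrow> nat \<Rightarrow> nat" where
  "dl C m j = (LEAST k. Q C m k j)"

definition part :: "'a set \<Rightarrow> ('a \<Rightarrow> 'a \<Rightarrow> bool) \<Rightarrow> nat \<Rightarrow> (nat \<Rightarrow> nat \<Rightarrow> nat) \<Rightarrow> 'a \<Rightarrow> (nat \<Rightarrow> 'a set) \<Rightarrow> bool" where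
  "part V E m C u P \<longleftrightarrow> P 1 = {u} \<and> (\<forall>i\<in>{1..m}. P i \<noteq> {}) \<and> (\<Union>i\<in>{1..m}. P i) = V \<and>
        (\<forall>i\<in>{1..m}. \<forall>j\<in>{1..m}. i \<noteq> j \<longrightarrow> P i \<inter> P j = {}) \<and>
        (\<forall>i\<in>{1..m}. \<forall>j\<in>{1..m}. \<forall>y\<in>P j. card {x \<in> P i. E x y} = C i j)"

lemma hr_cam_part: "hr_cam V E m C \<longleftrightarrow> 2 \<le> m \<and> (m < card V \<or> (m = card V \<and> card V = 2)) \<and>
   (\<forall>u\<in>V. \<exists>P. part V E m C u P)"
  unfolding hr_cam_def part_def by simp

lemma g_le: "(u,v) \<in> adj_rel E ^^ k \<Longrightarrow> gdist E u v \<le> k"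
  unfolding gdist_def by (rule Least_le)

context
  fixes V :: "'a set" and E :: "'a \<Rightarrow> 'a \<Rightarrow> bool"
  assumes sg: "simple_graph V E" and con: "gconnected V E"
begin

lemma g_path: "u \<in> V \<Longrightarrow> v \<in> V \<Longrightarrow> (u,v) \<in> adj_rel E ^^ gdist E u v"
proof -
  assume "u \<in> V" "v \<in> V"
  then obtain k where "(u,v) \<in> adj_rel E ^^ k" using con unfolding gconnected_def by blast
  thus ?thesis unfolding gdist_def by (rule LeastI)
qed

lemma g0: "u \<in> V \<Longrightarrow> v \<in> V \<Longrightarrow> gdist E u v = 0 \<longleftrightarrow> u = v"
proof
  assume "u \<in> V" "v \<in> V" "gdist E u v = 0"
  then show "u = v" using g_path[of u v] by simp
next
  assume "u = v"
  then have "(u,v) \<in> adj_rel E ^^ 0" by simp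
  then show "gdist E u v = 0" using g_le by force
qed

lemma gstep: "u \<in> V \<Longrightarrow> y \<in> V \<Longrightarrow>
   gdist E u y \<le> Suc k \<longleftrightarrow> (gdist E u y \<le> k \<or> (\<exists>x\<in>V. E x y \<and> gdist E u x \<le> k))"
proof
  assume u: "u \<in> V" and y: "y \<in> V" and le: "gdist E u y \<le> Suc k"
  show "gdist E u y \<le> k \<or> (\<exists>x\<in>V. E x y \<and> gdist E u x \<le> k)"
  proof (cases "gdist E u y \<le> k")
    case False
    then have "gdist E u y = Suc k" using le by simp
    with g_path[OF u y] have "(u,y) \<in> adj_rel E ^^ Suc k" by simp
    then obtain x where "(u,x) \<in> adj_rel E ^^ k" "(x,y) \<in> adj_rel E" by auto
    then have "E x y" "gdist E u x \<le> k" by (auto simp: adj_rel_def intro: g_le)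
    moreover have "x \<in> V" using sgE(2)[OF sg] \<open>E x y\<close> by blast
    ultimately show ?thesis by blast
  qed simp
next
  assume u: "u \<in> V" and y: "y \<in> V" and d: "gdist E u y \<le> k \<or> (\<exists>x\<in>V. E x y \<and> gdist E u x \<le> k)"
  show "gdist E u y \<le> Suc k"
  proof (cases "gdist E u y \<le> k")
    case False
    then obtain x where x: "x \<in> V" "E x y" "gdist E u x \<le> k" using d by blast
    have "(u,x) \<in> adj_rel E ^^ gdist E u x" using g_path[OF u x(1)] .
    moreover have "(x,y) \<in> adj_rel E" using x by (simp add: adj_rel_def)
    ultimately have "(u,y) \<in> adj_rel E ^^ Suc (gdist E u x)" by auto
    then have "gdist E u y \<le> Suc (gdist E u x)" by (rule g_le)
    then show ?thesis using x by simp
  qed simp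
qed

lemma g_tri: "u \<in> V \<Longrightarrow> E x y \<Longrightarrow> gdist E u y \<le> Suc (gdist E u x)"
  using gstep[of u y "gdist E u x"] sgE[OF sg] by blast

lemma g1: "x \<in> V \<Longrightarrow> y \<in> V \<Longrightarrow> gdist E y x = 1 \<longleftrightarrow> E y x"
proof -
  assume x: "x \<in> V" and y: "y \<in> V"
  have a: "gdist E y x \<le> Suc 0 \<longleftrightarrow> (gdist E y x = 0 \<or> (\<exists>z\<in>V. E z x \<and> gdist E y z = 0))"
    using gstep[OF y x, of 0] by simp
  have b: "\<And>z. z \<in> V \<Longrightarrow> gdist E y z = 0 \<longleftrightarrow> y = z" by (rule g0[OF y])
  have c: "gdist E y x = 0 \<longleftrightarrow> y = x" using b[OF x] .
  have "E y x \<Longrightarrow> y \<noteq> x" using sgE(5)[OF sg] by blast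
  then show ?thesis using a b c y by (auto simp del: One_nat_def simp: One_nat_def[symmetric]) 
qed

lemma g_pred: "x \<in> V \<Longrightarrow> w \<in> V \<Longrightarrow> gdist E x w = Suc n \<Longrightarrow> \<exists>b\<in>V. E b w \<and> gdist E x b = n"
proof -
  assume x: "x \<in> V" and w: "w \<in> V" and d: "gdist E x w = Suc n"
  then obtain b where b: "b \<in> V" "E b w" "gdist E x b \<le> n" using gstep[OF x w, of n] by auto
  have "gdist E x w \<le> Suc (gdist E x b)" using g_tri[OF x b(2)] .
  then show ?thesis using b d by force
qed

lemma g_mid: "x \<in> V \<Longrightarrow> v \<in> V \<Longrightarrow> gdist E x v = n \<Longrightarrow> k \<le> n \<Longrightarrow> \<exists>w\<in>V. gdist E x w = k"
proof (induction n arbitrary: v)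
  case 0
  then show ?case by auto
next
  case (Suc n)
  show ?case
  proof (cases "k = Suc n")
    case True then show ?thesis using Suc by blast
  next
    case False
    obtain b where "b \<in> V" "gdist E x b = n" using g_pred Suc.prems by blast
    then show ?thesis using Suc False by auto
  qed
qed

lemma diam_set: "{gdist E u v | u v. u \<in> V \<and> v \<in> V} = (\<lambda>(u,v). gdist E u v) ` (V \<times> V)"
  by auto

lemma diam_ge: "u \<in> V \<Longrightarrow> v \<in> V \<Longrightarrow> gdist E u v \<le> diam V E"
  unfolding diam_def diam_set using sgE(1)[OF sg] by (intro Max_ge) auto

lemma diam_at: "\<exists>u\<in>V. \<exists>v\<in>V. gdist E u v = diam V E"
proof -
  have "V \<noteq> {}" using con unfolding gconnected_def by blast
  then have "diam V E \<in> (\<lambda>(u,v). gdist E u v) ` (V \<times> V)"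
    unfolding diam_def diam_set using sgE(1)[OF sg] by (intro Max_in) auto
  then show ?thesis by force
qed

lemma part_sub: "part V E m C u P \<Longrightarrow> i \<in> {1..m} \<Longrightarrow> P i \<subseteq> V"
  unfolding part_def by blast

lemma cell_of: "part V E m C u P \<Longrightarrow> x \<in> V \<Longrightarrow> \<exists>j\<in>{1..m}. x \<in> P j"
  unfolding part_def by (metis UN_iff)

lemma KL: "u \<in> V \<Longrightarrow> part V E m C u P \<Longrightarrow> j \<in> {1..m} \<Longrightarrow> y \<in> P j \<Longrightarrow>
   gdist E u y \<le> k \<longleftrightarrow> Q C m k j"
proof (induction k arbitrary: j y)
  case 0
  have yV: "y \<in> V" using part_sub[OF 0(2) 0(3)] 0(4) by blast
  have P1: "P 1 = {u}" using 0(2) unfolding part_def by blast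
  have dis: "\<forall>i\<in>{1..m}. \<forall>j\<in>{1..m}. i \<noteq> j \<longrightarrow> P i \<inter> P j = {}" using 0(2) unfolding part_def by blast
  have "gdist E u y \<le> 0 \<longleftrightarrow> u = y" using g0[OF 0(1) yV] by simp
  moreover have "u = y \<longleftrightarrow> j = 1"
  proof
    assume "u = y"
    then have "y \<in> P 1 \<inter> P j" using P1 0(4) by auto
    moreover have "1 \<in> {1..m}" using 0(3) by auto
    ultimately show "j = 1" using dis 0(3) by blast
  next
    assume "j = 1" then show "u = y" using P1 0(4) by auto
  qed
  ultimately show ?case by simp
next
  case (Suc k)
  have yV: "y \<in> V" using part_sub[OF Suc(3) Suc(4)] Suc(5) by blast
  have fin: "finite V" using sgE(1)[OF sg] .
  have cards: "\<forall>i\<in>{1..m}. \<forall>j\<in>{1..m}. \<forall>y\<in>P j. card {x \<in> P i. E x y} = C i j"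
    using Suc(3) unfolding part_def by blast
  have cij: "\<And>i. i \<in> {1..m} \<Longrightarrow> card {x \<in> P i. E x y} = C i j" using cards Suc(4) Suc(5) by blast
  have "(\<exists>x\<in>V. E x y \<and> gdist E u x \<le> k) \<longleftrightarrow> (\<exists>i\<in>{1..m}. Q C m k i \<and> 0 < C i j)"
  proof
    assume "\<exists>x\<in>V. E x y \<and> gdist E u x \<le> k"
    then obtain x where x: "x \<in> V" "E x y" "gdist E u x \<le> k" by blast
    obtain i where i: "i \<in> {1..m}" "x \<in> P i" using cell_of[OF Suc(3) x(1)] by blast
    have "Q C m k i" using Suc.IH[OF Suc(2) Suc(3) i] x(3) by blast
    moreover have "finite {x \<in> P i. E x y}"
      by (rule finite_subset[OF _ fin]) (use part_sub[OF Suc(3) i(1)] in auto)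
    then have "0 < card {x \<in> P i. E x y}" using x i by (auto simp: card_gt_0_iff)
    then have "0 < C i j" using cij[OF i(1)] by simp
    ultimately show "\<exists>i\<in>{1..m}. Q C m k i \<and> 0 < C i j" using i by blast
  next
    assume "\<exists>i\<in>{1..m}. Q C m k i \<and> 0 < C i j"
    then obtain i where i: "i \<in> {1..m}" "Q C m k i" "0 < C i j" by blast
    then have "0 < card {x \<in> P i. E x y}" using cij[OF i(1)] by simp
    then obtain x where x: "x \<in> P i" "E x y" by (auto simp: card_gt_0_iff)
    have "x \<in> V" using part_sub[OF Suc(3) i(1)] x by blast
    moreover have "gdist E u x \<le> k" using Suc.IH[OF Suc(2) Suc(3) i(1) x(1)] i(2) by blast
    ultimately show "\<exists>x\<in>V. E x y \<and> gdist E u x \<le> k" using x by blast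
  qed
  then show ?case using gstep[OF Suc(2) yV, of k] Suc.IH[OF Suc(2) Suc(3) Suc(4) Suc(5)] by simp
qed

lemma cell_dist: "u \<in> V \<Longrightarrow> part V E m C u P \<Longrightarrow> j \<in> {1..m} \<Longrightarrow> y \<in> P j \<Longrightarrow> gdist E u y = dl C m j"
proof -
  assume a: "u \<in> V" "part V E m C u P" "j \<in> {1..m}" "y \<in> P j"
  have q: "Q C m (gdist E u y) j" using KL[OF a, of "gdist E u y"] by simp
  then have "dl C m j \<le> gdist E u y" unfolding dl_def by (rule Least_le)
  moreover have "Q C m (dl C m j) j" unfolding dl_def using q by (rule LeastI)
  then have "gdist E u y \<le> dl C m j" using KL[OF a] by simp
  ultimately show ?thesis by simp
qed

lemma img_sup: "hr_cam V E m C \<Longrightarrow> {0..diam V E} \<subseteq> dl C m ` {1..m}"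
proof
  fix k assume h: "hr_cam V E m C" and k: "k \<in> {0..diam V E}"
  obtain u v where uv: "u \<in> V" "v \<in> V" "gdist E u v = diam V E" using diam_at by blast
  obtain P where P: "part V E m C u P" using h uv(1) unfolding hr_cam_part by blast
  obtain w where w: "w \<in> V" "gdist E u w = k" using g_mid[OF uv(1) uv(2) uv(3)] k by auto
  obtain j where j: "j \<in> {1..m}" "w \<in> P j" using cell_of[OF P w(1)] by blast
  show "k \<in> dl C m ` {1..m}" using cell_dist[OF uv(1) P j] w j by auto
qed

lemma LB: "hr_cam V E m C \<Longrightarrow> diam V E + 1 \<le> m"
proof -
  assume h: "hr_cam V E m C"
  have "card {0..diam V E} \<le> card (dl C m ` {1..m})" using img_sup[OF h] by (intro card_mono) auto
  also have "\<dots> \<le> card {1..m}" by (rule card_image_le) simp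
  finally show ?thesis by simp
qed


lemma img_sub: "hr_cam V E m C \<Longrightarrow> dl C m ` {1..m} \<subseteq> {0..diam V E}"
proof
  fix k assume h: "hr_cam V E m C" and k: "k \<in> dl C m ` {1..m}"
  then obtain j where j: "j \<in> {1..m}" "k = dl C m j" by blast
  obtain u where u: "u \<in> V" using con unfolding gconnected_def by blast
  obtain P where P: "part V E m C u P" using h u unfolding hr_cam_part by blast
  have "P j \<noteq> {}" using P j(1) unfolding part_def by blast
  then obtain y where y: "y \<in> P j" by blast
  have "y \<in> V" using part_sub[OF P j(1)] y by blast
  then have "gdist E u y \<le> diam V E" using diam_ge[OF u] by blast
  then show "k \<in> {0..diam V E}" using cell_dist[OF u P j(1) y] j(2) by simp
qed

lemma img_eq: "hr_cam V E m C \<Longrightarrow> dl C m ` {1..m} = {0..diam V E}"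
  using img_sub img_sup by blast

lemma inj_dl: "hr_cam V E m C \<Longrightarrow> m = diam V E + 1 \<Longrightarrow> inj_on (dl C m) {1..m}"
proof -
  assume h: "hr_cam V E m C" and m: "m = diam V E + 1"
  have "card (dl C m ` {1..m}) = card {1..m}" using img_eq[OF h] m by simp
  then show ?thesis by (intro eq_card_imp_inj_on) auto
qed

lemma sph_cell:
  assumes h: "hr_cam V E m C" and m: "m = diam V E + 1" and u: "u \<in> V" and P: "part V E m C u P"
    and j: "j \<in> {1..m}"
  shows "sphere V E (dl C m j) u = P j"
proof
  show "sphere V E (dl C m j) u \<subseteq> P j"
  proof
    fix x assume "x \<in> sphere V E (dl C m j) u"
    then have x: "x \<in> V" "gdist E u x = dl C m j" unfolding sphere_def by auto
    obtain k where k: "k \<in> {1..m}" "x \<in> P k" using cell_of[OF P x(1)] by blast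
    have "dl C m k = dl C m j" using cell_dist[OF u P k] x(2) by simp
    then have "k = j" using inj_onD[OF inj_dl[OF h m]] k(1) j by blast
    then show "x \<in> P j" using k by simp
  qed
next
  show "P j \<subseteq> sphere V E (dl C m j) u"
    using cell_dist[OF u P j] part_sub[OF P j] unfolding sphere_def by auto
qed

lemma sph_empty:
  assumes h: "hr_cam V E m C" and u: "u \<in> V" and P: "part V E m C u P"
    and s: "s \<notin> dl C m ` {1..m}"
  shows "sphere V E s u = {}"
proof -
  { fix x assume "x \<in> sphere V E s u"
    then have x: "x \<in> V" "gdist E u x = s" unfolding sphere_def by auto
    obtain k where k: "k \<in> {1..m}" "x \<in> P k" using cell_of[OF P x(1)] by blast
    have False using cell_dist[OF u P k] x(2) s k(1) by blast }
  then show ?thesis by blast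
qed

lemma card_sph:
  assumes h: "hr_cam V E m C" and m: "m = diam V E + 1" and u: "u \<in> V" and P: "part V E m C u P"
    and j: "j \<in> {1..m}" and v: "v \<in> P j" and j': "j' \<in> {1..m}"
  shows "card (sphere V E 1 v \<inter> sphere V E (dl C m j') u) = C j' j"
proof -
  have vV: "v \<in> V" using part_sub[OF P j] v by blast
  have "sphere V E 1 v \<inter> sphere V E (dl C m j') u = {x \<in> P j'. E x v}"
    unfolding sph_cell[OF h m u P j'] using part_sub[OF P j'] g1[OF _ vV] sgE(4)[OF sg]
    unfolding sphere_def by blast
  then show ?thesis using P j j' v unfolding part_def by simp
qed

lemma fwd:
  assumes h: "hr_cam V E (diam V E + 1) C"
  shows "distance_regular V E"
proof -
  let ?m = "diam V E + 1"
  have key: "card (sphere V E 1 v \<inter> sphere V E s u) = card (sphere V E 1 v' \<inter> sphere V E s u')"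
    if a: "u \<in> V" "v \<in> V" "u' \<in> V" "v' \<in> V" "gdist E u v = gdist E u' v'" for u v u' v' s
  proof -
    obtain P where P: "part V E ?m C u P" using h a(1) unfolding hr_cam_part by blast
    obtain P' where P': "part V E ?m C u' P'" using h a(3) unfolding hr_cam_part by blast
    obtain j where j: "j \<in> {1..?m}" "v \<in> P j" using cell_of[OF P a(2)] by blast
    obtain j2 where j2: "j2 \<in> {1..?m}" "v' \<in> P' j2" using cell_of[OF P' a(4)] by blast
    have "dl C ?m j = dl C ?m j2" using cell_dist[OF a(1) P j] cell_dist[OF a(3) P' j2] a(5) by simp
    then have jj: "j2 = j" using inj_onD[OF inj_dl[OF h refl]] j(1) j2(1) by metis
    show ?thesis
    proof (cases "s \<in> dl C ?m ` {1..?m}")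
      case True
      then obtain j' where j': "j' \<in> {1..?m}" "s = dl C ?m j'" by blast
      show ?thesis using card_sph[OF h refl a(1) P j j'(1)] card_sph[OF h refl a(3) P' j2 j'(1)] jj j'(2)
        by simp
    next
      case False
      then show ?thesis using sph_empty[OF h a(1) P False] sph_empty[OF h a(3) P' False] by simp
    qed
  qed
  show ?thesis unfolding distance_regular_def Let_def using con key by blast
qed

lemma drE:
  assumes "distance_regular V E" "u \<in> V" "v \<in> V" "u' \<in> V" "v' \<in> V" "gdist E u v = gdist E u' v'"
  shows "card (sphere V E 1 v \<inter> sphere V E (gdist E u v - 1) u) = card (sphere V E 1 v' \<inter> sphere V E (gdist E u v - 1) u')"
    "card (sphere V E 1 v \<inter> sphere V E (gdist E u v) u) = card (sphere V E 1 v' \<inter> sphere V E (gdist E u v) u')"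
    "card (sphere V E 1 v \<inter> sphere V E (gdist E u v + 1) u) = card (sphere V E 1 v' \<inter> sphere V E (gdist E u v + 1) u')"
proof -
  have "\<forall>u\<in>V. \<forall>v\<in>V. \<forall>u'\<in>V. \<forall>v'\<in>V. gdist E u v = gdist E u' v' \<longrightarrow>
        card (sphere V E 1 v \<inter> sphere V E (gdist E u v - 1) u) = card (sphere V E 1 v' \<inter> sphere V E (gdist E u v - 1) u')
        \<and> card (sphere V E 1 v \<inter> sphere V E (gdist E u v) u) = card (sphere V E 1 v' \<inter> sphere V E (gdist E u v) u')
        \<and> card (sphere V E 1 v \<inter> sphere V E (gdist E u v + 1) u) = card (sphere V E 1 v' \<inter> sphere V E (gdist E u v + 1) u')"
    using assms(1) unfolding distance_regular_def Let_def by blast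
  then have "card (sphere V E 1 v \<inter> sphere V E (gdist E u v - 1) u) = card (sphere V E 1 v' \<inter> sphere V E (gdist E u v - 1) u')
        \<and> card (sphere V E 1 v \<inter> sphere V E (gdist E u v) u) = card (sphere V E 1 v' \<inter> sphere V E (gdist E u v) u')
        \<and> card (sphere V E 1 v \<inter> sphere V E (gdist E u v + 1) u) = card (sphere V E 1 v' \<inter> sphere V E (gdist E u v + 1) u')"
    using assms(2-6) by blast
  then show "card (sphere V E 1 v \<inter> sphere V E (gdist E u v - 1) u) = card (sphere V E 1 v' \<inter> sphere V E (gdist E u v - 1) u')"
    "card (sphere V E 1 v \<inter> sphere V E (gdist E u v) u) = card (sphere V E 1 v' \<inter> sphere V E (gdist E u v) u')"
    "card (sphere V E 1 v \<inter> sphere V E (gdist E u v + 1) u) = card (sphere V E 1 v' \<inter> sphere V E (gdist E u v + 1) u')"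
    by blast+
qed

lemma sph_fin: "finite (sphere V E s u)"
  using sgE(1)[OF sg] unfolding sphere_def by simp

lemma DR_ex:
  assumes dr: "distance_regular V E" and u: "u \<in> V"
  shows "k \<le> diam V E \<Longrightarrow> \<exists>v\<in>V. gdist E u v = k"
proof (induction k)
  case 0 then show ?case using u g0[OF u u] by blast
next
  case (Suc k)
  then obtain v where v: "v \<in> V" "gdist E u v = k" by auto
  obtain x z where xz: "x \<in> V" "z \<in> V" "gdist E x z = diam V E" using diam_at by blast
  obtain w where w: "w \<in> V" "gdist E x w = Suc k" using g_mid[OF xz] Suc.prems by blast
  obtain b where b: "b \<in> V" "E b w" "gdist E x b = k" using g_pred[OF xz(1) w] by blast
  have "w \<in> sphere V E 1 b \<inter> sphere V E (k+1) x"
    using g1[OF w(1) b(1)] b w unfolding sphere_def by simp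
  then have "0 < card (sphere V E 1 b \<inter> sphere V E (k+1) x)"
    using sph_fin by (auto simp: card_gt_0_iff)
  moreover have "card (sphere V E 1 v \<inter> sphere V E (k+1) u) = card (sphere V E 1 b \<inter> sphere V E (k+1) x)"
    using drE(3)[OF dr u v(1) xz(1) b(1)] v(2) b(3) by simp
  ultimately have "sphere V E (k+1) u \<noteq> {}" by auto
  then show ?case unfolding sphere_def by auto
qed

lemma DRcount:
  assumes dr: "distance_regular V E" and a: "u \<in> V" "y \<in> V" "u' \<in> V" "y' \<in> V"
    and eq: "gdist E u y = gdist E u' y'"
  shows "card {x \<in> sphere V E s u. E x y} = card {x \<in> sphere V E s u'. E x y'}"
proof -
  have S: "{x \<in> sphere V E s u. E x y} = sphere V E 1 y \<inter> sphere V E s u"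
    if "u \<in> V" "y \<in> V" for u y
    using g1[OF _ that(2)] sgE(4)[OF sg] unfolding sphere_def by blast
  let ?t = "gdist E u y"
  show ?thesis
  proof (cases "s = ?t - 1 \<or> s = ?t \<or> s = ?t + 1")
    case True
    then show ?thesis unfolding S[OF a(1,2)] S[OF a(3,4)] using drE[OF dr a eq] by auto
  next
    case False
    have emp: "{x \<in> sphere V E s u. E x y} = {}" if b: "u \<in> V" "gdist E u y = ?t" for u y
    proof -
      { fix x assume x: "x \<in> sphere V E s u" "E x y"
        have "gdist E u y \<le> Suc (gdist E u x)" using g_tri[OF b(1) x(2)] .
        moreover have "gdist E u x \<le> Suc (gdist E u y)" using g_tri[OF b(1) sgE(4)[OF sg x(2)]] .
        moreover have "gdist E u x = s" using x unfolding sphere_def by simp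
        ultimately have False using False b(2) by linarith }
      then show ?thesis by blast
    qed
    have e1: "{x \<in> sphere V E s u. E x y} = {}" using emp[OF a(1) refl] .
    have e2: "{x \<in> sphere V E s u'. E x y'} = {}" using emp[OF a(3) eq[symmetric]] .
    show ?thesis by (simp only: e1 e2)
  qed
qed

lemma bwd:
  assumes dr: "distance_regular V E" and hr: "highly_regular V E"
  shows "\<exists>C. hr_cam V E (diam V E + 1) C"
proof -
  let ?d = "diam V E"
  obtain m0 C0 where h0: "hr_cam V E m0 C0" using hr unfolding highly_regular_def by blast
  have lb: "?d + 1 \<le> m0" using LB[OF h0] .
  have m0: "2 \<le> m0" "m0 < card V \<or> (m0 = card V \<and> card V = 2)" using h0 unfolding hr_cam_part by auto
  obtain a where a: "a \<in> V" using con unfolding gconnected_def by blast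
  have "V \<noteq> {a}" using m0 by auto
  then obtain b where b: "b \<in> V" "b \<noteq> a" using a by blast
  have "gdist E a b \<noteq> 0" using g0[OF a b(1)] b(2) by simp
  then have d1: "1 \<le> ?d" using diam_ge[OF a b(1)] by simp
  have size: "?d + 1 < card V \<or> (?d + 1 = card V \<and> card V = 2)" using m0 lb d1 by auto
  define yy where "yy j = (SOME y. y \<in> V \<and> gdist E a y = j - 1)" for j
  define C where "C i j = card {x \<in> sphere V E (i - 1) a. E x (yy j)}" for i j
  have yy: "yy j \<in> V \<and> gdist E a (yy j) = j - 1" if "j \<in> {1..?d+1}" for j
  proof -
    have "j - 1 \<le> ?d" using that by auto
    then have "\<exists>y. y \<in> V \<and> gdist E a y = j - 1" using DR_ex[OF dr a, of "j - 1"] by blast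
    then show ?thesis unfolding yy_def by (rule someI_ex)
  qed
  have part: "part V E (?d+1) C u (\<lambda>i. sphere V E (i - 1) u)" if u: "u \<in> V" for u
    unfolding part_def
  proof (intro conjI ballI impI)
    show "sphere V E (1 - 1) u = {u}" using g0[OF u] u unfolding sphere_def by auto
  next
    fix i assume "i \<in> {1..?d+1}"
    then have "i - 1 \<le> ?d" by auto
    then obtain v where "v \<in> V" "gdist E u v = i - 1" using DR_ex[OF dr u, of "i - 1"] by blast
    then show "sphere V E (i - 1) u \<noteq> {}" unfolding sphere_def by auto
  next
    show "(\<Union>i\<in>{1..?d+1}. sphere V E (i - 1) u) = V"
    proof
      show "(\<Union>i\<in>{1..?d+1}. sphere V E (i - 1) u) \<subseteq> V" unfolding sphere_def by auto
    next
      show "V \<subseteq> (\<Union>i\<in>{1..?d+1}. sphere V E (i - 1) u)"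
      proof
        fix v assume v: "v \<in> V"
        have "gdist E u v + 1 \<in> {1..?d+1}" using diam_ge[OF u v] by simp
        moreover have "v \<in> sphere V E (gdist E u v + 1 - 1) u" using v unfolding sphere_def by simp
        ultimately show "v \<in> (\<Union>i\<in>{1..?d+1}. sphere V E (i - 1) u)" by blast
      qed
    qed
  next
    fix i j assume "i \<in> {1..?d+1}" "j \<in> {1..?d+1}" "i \<noteq> j"
    then show "sphere V E (i - 1) u \<inter> sphere V E (j - 1) u = {}" unfolding sphere_def by auto
  next
    fix i j y assume i: "i \<in> {1..?d+1}" and j: "j \<in> {1..?d+1}" and y: "y \<in> sphere V E (j - 1) u"
    have yV: "y \<in> V" "gdist E u y = j - 1" using y unfolding sphere_def by auto
    show "card {x \<in> sphere V E (i - 1) u. E x y} = C i j"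
      unfolding C_def using DRcount[OF dr u yV(1) a, of "yy j" "i - 1"] yy[OF j] yV(2) by simp
  qed
  show ?thesis unfolding hr_cam_part using d1 size part by auto
qed


end

theorem corollary3p2:
  fixes V :: "'a set" and E :: "'a \<Rightarrow> 'a \<Rightarrow> bool"
  assumes "simple_graph V E" and "gconnected V E" and "highly_regular V E"
  shows "hr_index V E = diam V E + 1 \<longleftrightarrow> distance_regular V E"
proof
  have ex: "\<exists>m C. hr_cam V E m C" using assms(3) unfolding highly_regular_def .
  assume "hr_index V E = diam V E + 1"
  moreover have "\<exists>C. hr_cam V E (hr_index V E) C" unfolding hr_index_def using ex by (rule LeastI_ex)
  ultimately obtain C where "hr_cam V E (diam V E + 1) C" by auto
  then show "distance_regular V E" using fwd[OF assms(1,2)] by blast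
next
  have ex: "\<exists>m C. hr_cam V E m C" using assms(3) unfolding highly_regular_def .
  assume dr: "distance_regular V E"
  obtain C where C: "hr_cam V E (diam V E + 1) C" using bwd[OF assms(1,2) dr assms(3)] by blast
  have le: "hr_index V E \<le> diam V E + 1" unfolding hr_index_def using C by (intro Least_le) blast
  have "\<exists>C. hr_cam V E (hr_index V E) C" unfolding hr_index_def using ex by (rule LeastI_ex)
  then obtain C' where "hr_cam V E (hr_index V E) C'" by blast
  then have "diam V E + 1 \<le> hr_index V E" using LB[OF assms(1,2)] by blast
  then show "hr_index V E = diam V E + 1" using le by simp
qed

end
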